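(* For every command $c$ and stores $\sigma,\sigma'$ of the While-language: $(c,\sigma)\Rightarrow^\infty$ if and only if $(c,\sigma,\Downarrow)\Rightarrow^{co}_G\sigma',\Uparrow$.
   Context: While-language syntax: variables $x$ range over a countably infinite set $\mathit{Var}$; $n$ ranges over natural numbers; values are $v ::= \mathsf{null}\mid n$ ($\mathsf{null}$ distinct from every natural number); expressions are $e ::= v\mid x\mid e_1\oplus e_2$ with $\oplus\in\{+,-,*\}$, where $\oplus(n_1,n_2)$ is the result of the operation on naturals; commands are $c ::= \mathsf{skip}\mid\mathsf{alloc}\ x\mid x:=e\mid c_1;c_2\mid \mathsf{if}\ e\ c_1\ c_2\mid\mathsf{while}\ e\ c$. A store $\sigma$ is a finite partial map from $\mathit{Var}$ to values, with domain $\mathrm{dom}(\sigma)$, lookup $\sigma(x)$, update $\sigma[x\mapsto v]$. Expression evaluation $(e,\sigma)\Rightarrow_E v$ is the least relation with: $(v,\sigma)\Rightarrow_E v$; $(x,\sigma)\Rightarrow_E\sigma(x)$ if $x\in\mathrm{dom}(\sigma)$; if $(e_1,\sigma)\Rightarrow_E n_1$ and $(e_2,\sigma)\Rightarrow_E n_2$ with $n_1,n_2$ naturals then $(e_1\oplus e_2,\sigma)\Rightarrow_E\oplus(n_1,n_2)$. Big-step relation $(c,\sigma)\Rightarrow_B\sigma'$ is the least relation with: $(\mathsf{skip},\sigma)\Rightarrow_B\sigma$; $(\mathsf{alloc}\ x,\sigma)\Rightarrow_B\sigma[x\mapsto\mathsf{null}]$ if $x\notin\mathrm{dom}(\sigma)$;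 $(x:=e,\sigma)\Rightarrow_B\sigma[x\mapsto v]$ if $x\in\mathrm{dom}(\sigma)$ and $(e,\sigma)\Rightarrow_E v$; $(c_1;c_2,\sigma)\Rightarrow_B\sigma''$ if $(c_1,\sigma)\Rightarrow_B\sigma'$ and $(c_2,\sigma')\Rightarrow_B\sigma''$; $(\mathsf{if}\ e\ c_1\ c_2,\sigma)\Rightarrow_B\sigma'$ if $(e,\sigma)\Rightarrow_E v$, $v\ne0$, $(c_1,\sigma)\Rightarrow_B\sigma'$; $(\mathsf{if}\ e\ c_1\ c_2,\sigma)\Rightarrow_B\sigma'$ if $(e,\sigma)\Rightarrow_E0$, $(c_2,\sigma)\Rightarrow_B\sigma'$; $(\mathsf{while}\ e\ c,\sigma)\Rightarrow_B\sigma''$ if $(e,\sigma)\Rightarrow_E v$, $v\ne0$, $(c,\sigma)\Rightarrow_B\sigma'$, $(\mathsf{while}\ e\ c,\sigma')\Rightarrow_B\sigma''$; $(\mathsf{while}\ e\ c,\sigma)\Rightarrow_B\sigma$ if $(e,\sigma)\Rightarrow_E0$. The big-step divergence predicate $(c,\sigma)\Rightarrow^\infty$ is the greatest predicate such that every element is the conclusion of an instance of one of these rules whose $\Rightarrow^\infty$-premises are in it: $(c_1,\sigma)\Rightarrow^\infty$ gives $(c_1;c_2,\sigma)\Rightarrow^\infty$; $(c_1,\sigma)\Rightarrow_B\sigma'$ and $(c_2,\sigma')\Rightarrow^\infty$ give $(c_1;c_2,\sigma)\Rightarrow^\infty$; $(e,\sigma)\Rightarrow_E v$, $v\ne0$,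 $(c_1,\sigma)\Rightarrow^\infty$ give $(\mathsf{if}\ e\ c_1\ c_2,\sigma)\Rightarrow^\infty$; $(e,\sigma)\Rightarrow_E0$, $(c_2,\sigma)\Rightarrow^\infty$ give $(\mathsf{if}\ e\ c_1\ c_2,\sigma)\Rightarrow^\infty$; $(e,\sigma)\Rightarrow_E v$, $v\ne0$, $(c,\sigma)\Rightarrow^\infty$ give $(\mathsf{while}\ e\ c,\sigma)\Rightarrow^\infty$; $(e,\sigma)\Rightarrow_E v$, $v\ne0$, $(c,\sigma)\Rightarrow_B\sigma'$, $(\mathsf{while}\ e\ c,\sigma')\Rightarrow^\infty$ give $(\mathsf{while}\ e\ c,\sigma)\Rightarrow^\infty$. Flag-based big-step semantics: status flags $\delta ::= \Downarrow\mid\Uparrow$ (convergent / divergent). Expression evaluation $(e,\sigma,\delta)\Rightarrow_{GE}v,\delta'$ is the least relation with: $(v,\sigma,\Downarrow)\Rightarrow_{GE}v,\Downarrow$; $(x,\sigma,\Downarrow)\Rightarrow_{GE}\sigma(x),\Downarrow$ if $x\in\mathrm{dom}(\sigma)$; if $(e_1,\sigma,\Downarrow)\Rightarrow_{GE}n_1,\delta$ and $(e_2,\sigma,\delta)\Rightarrow_{GE}n_2,\delta'$ ($n_1,n_2$ naturals) then $(e_1\oplus e_2,\sigma,\Downarrow)\Rightarrow_{GE}\oplus(n_1,n_2),\delta'$; and $(e,\sigma,\Uparrow)\Rightarrow_{GE}v,\Uparrow$ for every value $v$. The command rules for judgments $(c,\sigma,\delta)\Rightarrow_G\sigma',\delta'$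 are: $(\mathsf{skip},\sigma,\Downarrow)\Rightarrow_G\sigma,\Downarrow$; $(\mathsf{alloc}\ x,\sigma,\Downarrow)\Rightarrow_G\sigma[x\mapsto\mathsf{null}],\Downarrow$ if $x\notin\mathrm{dom}(\sigma)$; $(x:=e,\sigma,\Downarrow)\Rightarrow_G\sigma[x\mapsto v],\delta$ if $x\in\mathrm{dom}(\sigma)$ and $(e,\sigma,\Downarrow)\Rightarrow_{GE}v,\delta$; $(c_1;c_2,\sigma,\Downarrow)\Rightarrow_G\sigma'',\delta'$ if $(c_1,\sigma,\Downarrow)\Rightarrow_G\sigma',\delta$ and $(c_2,\sigma',\delta)\Rightarrow_G\sigma'',\delta'$; $(\mathsf{if}\ e\ c_1\ c_2,\sigma,\Downarrow)\Rightarrow_G\sigma',\delta'$ if $v\ne0$, $(e,\sigma,\Downarrow)\Rightarrow_{GE}v,\delta$ and $(c_1,\sigma,\delta)\Rightarrow_G\sigma',\delta'$; $(\mathsf{if}\ e\ c_1\ c_2,\sigma,\Downarrow)\Rightarrow_G\sigma',\delta'$ if $(e,\sigma,\Downarrow)\Rightarrow_{GE}0,\delta$ and $(c_2,\sigma,\delta)\Rightarrow_G\sigma',\delta'$; $(\mathsf{while}\ e\ c,\sigma,\Downarrow)\Rightarrow_G\sigma'',\delta''$ if $(e,\sigma,\Downarrow)\Rightarrow_{GE}v,\delta$, $v\ne0$, $(c,\sigma,\delta)\Rightarrow_G\sigma',\delta'$ and $(\mathsf{while}\ e\ c,\sigma',\delta')\Rightarrow_G\sigma'',\delta''$; $(\mathsf{while}\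 e\ c,\sigma,\Downarrow)\Rightarrow_G\sigma,\delta$ if $(e,\sigma,\Downarrow)\Rightarrow_{GE}0,\delta$; $(c,\sigma,\Uparrow)\Rightarrow_G\sigma',\Uparrow$ for every store $\sigma'$. $\Rightarrow^{co}_G$ denotes the coinductive interpretation of these command rules: the greatest relation such that every element is the conclusion of a rule instance whose command premises lie in it (the $\Rightarrow_{GE}$ premises refer to the expression relation above). *)

theory Defs
  imports Main "HOL-Library.Finite_Map"
begin

type_synonym var = nat

datatype val = Null | N nat

datatype binop = Plus | Minus | Times

datatype exp = Val val | Var var | Bin binop exp exp

datatype com = Skip | Alloc var | Assign var exp | Seq com com
  | If exp com com | While exp com

type_synonym store = "(var, val) fmap"

fun apply_op :: "binop \<Rightarrow> nat \<Rightarrow> nat \<Rightarrow> nat" where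
  "apply_op Plus a b = a + b"
| "apply_op Minus a b = a - b"
| "apply_op Times a b = a * b"

inductive eval :: "exp \<Rightarrow> store \<Rightarrow> val \<Rightarrow> bool" where
  EVal: "eval (Val v) \<sigma> v"
| EVar: "fmlookup \<sigma> x = Some v \<Longrightarrow> eval (Var x) \<sigma> v"
| EBin: "eval e1 \<sigma> (N n1) \<Longrightarrow> eval e2 \<sigma> (N n2) \<Longrightarrow>
         eval (Bin op e1 e2) \<sigma> (N (apply_op op n1 n2))"

inductive bigstep :: "com \<Rightarrow> store \<Rightarrow> store \<Rightarrow> bool" where
  BSkip: "bigstep Skip \<sigma> \<sigma>"
| BAlloc: "x |\<notin>| fmdom \<sigma> \<Longrightarrow> bigstep (Alloc x) \<sigma> (fmupd x Null \<sigma>)"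
| BAssign: "x |\<in>| fmdom \<sigma> \<Longrightarrow> eval e \<sigma> v \<Longrightarrow> bigstep (Assign x e) \<sigma> (fmupd x v \<sigma>)"
| BSeq: "bigstep c1 \<sigma> \<sigma>' \<Longrightarrow> bigstep c2 \<sigma>' \<sigma>'' \<Longrightarrow> bigstep (Seq c1 c2) \<sigma> \<sigma>''"
| BIfT: "eval e \<sigma> v \<Longrightarrow> v \<noteq> N 0 \<Longrightarrow> bigstep c1 \<sigma> \<sigma>' \<Longrightarrow> bigstep (If e c1 c2) \<sigma> \<sigma>'"
| BIfF: "eval e \<sigma> (N 0) \<Longrightarrow> bigstep c2 \<sigma> \<sigma>' \<Longrightarrow> bigstep (If e c1 c2) \<sigma> \<sigma>'"
| BWhileT: "eval e \<sigma> v \<Longrightarrow> v \<noteq> N 0 \<Longrightarrow> bigstep c \<sigma> \<sigma>' \<Longrightarrow>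
            bigstep (While e c) \<sigma>' \<sigma>'' \<Longrightarrow> bigstep (While e c) \<sigma> \<sigma>''"
| BWhileF: "eval e \<sigma> (N 0) \<Longrightarrow> bigstep (While e c) \<sigma> \<sigma>"

coinductive diverges :: "com \<Rightarrow> store \<Rightarrow> bool" where
  DSeq1: "diverges c1 \<sigma> \<Longrightarrow> diverges (Seq c1 c2) \<sigma>"
| DSeq2: "bigstep c1 \<sigma> \<sigma>' \<Longrightarrow> diverges c2 \<sigma>' \<Longrightarrow> diverges (Seq c1 c2) \<sigma>"
| DIfT: "eval e \<sigma> v \<Longrightarrow> v \<noteq> N 0 \<Longrightarrow> diverges c1 \<sigma> \<Longrightarrow> diverges (If e c1 c2) \<sigma>"
| DIfF: "eval e \<sigma> (N 0) \<Longrightarrow> diverges c2 \<sigma> \<Longrightarrow> diverges (If e c1 c2) \<sigma>"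
| DWhile1: "eval e \<sigma> v \<Longrightarrow> v \<noteq> N 0 \<Longrightarrow> diverges c \<sigma> \<Longrightarrow> diverges (While e c) \<sigma>"
| DWhile2: "eval e \<sigma> v \<Longrightarrow> v \<noteq> N 0 \<Longrightarrow> bigstep c \<sigma> \<sigma>' \<Longrightarrow>
            diverges (While e c) \<sigma>' \<Longrightarrow> diverges (While e c) \<sigma>"

datatype flag = Conv | Div

inductive geval :: "exp \<Rightarrow> store \<Rightarrow> flag \<Rightarrow> val \<Rightarrow> flag \<Rightarrow> bool" where
  GVal: "geval (Val v) \<sigma> Conv v Conv"
| GVar: "fmlookup \<sigma> x = Some v \<Longrightarrow> geval (Var x) \<sigma> Conv v Conv"
| GBin: "geval e1 \<sigma> Conv (N n1) \<delta> \<Longrightarrow> geval e2 \<sigma> \<delta> (N n2) \<delta>' \<Longrightarrow>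
         geval (Bin op e1 e2) \<sigma> Conv (N (apply_op op n1 n2)) \<delta>'"
| GDiv: "geval e \<sigma> Div v Div"

coinductive gco :: "com \<Rightarrow> store \<Rightarrow> flag \<Rightarrow> store \<Rightarrow> flag \<Rightarrow> bool" where
  GSkip: "gco Skip \<sigma> Conv \<sigma> Conv"
| GAlloc: "x |\<notin>| fmdom \<sigma> \<Longrightarrow> gco (Alloc x) \<sigma> Conv (fmupd x Null \<sigma>) Conv"
| GAssign: "x |\<in>| fmdom \<sigma> \<Longrightarrow> geval e \<sigma> Conv v \<delta> \<Longrightarrow> gco (Assign x e) \<sigma> Conv (fmupd x v \<sigma>) \<delta>"
| GSeq: "gco c1 \<sigma> Conv \<sigma>' \<delta> \<Longrightarrow> gco c2 \<sigma>' \<delta> \<sigma>'' \<delta>' \<Longrightarrow> gco (Seq c1 c2) \<sigma> Conv \<sigma>'' \<delta>'"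
| GIfT: "v \<noteq> N 0 \<Longrightarrow> geval e \<sigma> Conv v \<delta> \<Longrightarrow> gco c1 \<sigma> \<delta> \<sigma>' \<delta>' \<Longrightarrow> gco (If e c1 c2) \<sigma> Conv \<sigma>' \<delta>'"
| GIfF: "geval e \<sigma> Conv (N 0) \<delta> \<Longrightarrow> gco c2 \<sigma> \<delta> \<sigma>' \<delta>' \<Longrightarrow> gco (If e c1 c2) \<sigma> Conv \<sigma>' \<delta>'"
| GWhileT: "geval e \<sigma> Conv v \<delta> \<Longrightarrow> v \<noteq> N 0 \<Longrightarrow> gco c \<sigma> \<delta> \<sigma>' \<delta>' \<Longrightarrow>
            gco (While e c) \<sigma>' \<delta>' \<sigma>'' \<delta>'' \<Longrightarrow> gco (While e c) \<sigma> Conv \<sigma>'' \<delta>''"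
| GWhileF: "geval e \<sigma> Conv (N 0) \<delta> \<Longrightarrow> gco (While e c) \<sigma> Conv \<sigma> \<delta>"
| GDivC: "gco c \<sigma> Div \<sigma>' Div"

end

theory Submission
  imports Defs
begin

lemma eval_det: "eval e s v \<Longrightarrow> eval e s v' \<Longrightarrow> v = v'"
proof (induction arbitrary: v' rule: eval.induct)
  case (EVal v \<sigma>) then show ?case by (auto elim: eval.cases)
next
  case (EVar \<sigma> x v) then show ?case by (auto elim: eval.cases)
next
  case (EBin e1 \<sigma> n1 e2 n2 op)
  from EBin.prems show ?case
    by (cases rule: eval.cases) (auto dest!: EBin.IH)
qed

lemma geval_conv: "geval e s d v d' \<Longrightarrow> d = Conv \<Longrightarrow> eval e s v \<and> d' = Conv"
  by (induction rule: geval.induct) (auto intro: eval.intros)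

lemma eval_geval: "eval e s v \<Longrightarrow> geval e s Conv v Conv"
  by (induction rule: eval.induct) (auto intro: geval.intros)

lemma bigstep_gco: "bigstep c s s' \<Longrightarrow> gco c s Conv s' Conv"
  by (induction rule: bigstep.induct) (auto intro: gco.intros eval_geval)

lemma bigstep_det_gco: "bigstep c s s1 \<Longrightarrow> gco c s Conv s2 d \<Longrightarrow> s2 = s1 \<and> d = Conv"
proof (induction arbitrary: s2 d rule: bigstep.induct)
  case (BSkip \<sigma>) then show ?case by (auto elim: gco.cases)
next
  case (BAlloc x \<sigma>) then show ?case by (auto elim: gco.cases)
next
  case (BAssign x \<sigma> e v) then show ?case
    by (auto elim!: gco.cases dest!: geval_conv dest: eval_det)
next
  case (BSeq c1 \<sigma> \<sigma>' c2 \<sigma>'')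
  from BSeq.prems show ?case
    by (cases rule: gco.cases) (auto dest!: BSeq.IH)
next
  case (BIfT e \<sigma> v c1 \<sigma>' c2)
  from BIfT.prems show ?case
  proof (cases rule: gco.cases)
    case (GIfT v' \<delta>)
    then show ?thesis using geval_conv eval_det[OF BIfT.hyps(1)] BIfT.IH by blast
  next
    case (GIfF \<delta>)
    then show ?thesis using geval_conv eval_det[OF BIfT.hyps(1)] BIfT.hyps(2) by blast
  qed
next
  case (BIfF e \<sigma> c2 \<sigma>' c1)
  from BIfF.prems show ?case
  proof (cases rule: gco.cases)
    case (GIfT v \<delta>)
    then show ?thesis using geval_conv eval_det[OF BIfF.hyps(1)] by blast
  next
    case (GIfF \<delta>)
    then show ?thesis using geval_conv BIfF.IH by blast
  qed
next
  case (BWhileT e \<sigma> v c \<sigma>' \<sigma>'')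
  from BWhileT.prems show ?case
  proof (cases rule: gco.cases)
    case (GWhileT v' \<delta> s1 \<delta>1)
    then show ?thesis using geval_conv BWhileT.IH by blast
  next
    case GWhileF
    then show ?thesis using geval_conv eval_det[OF BWhileT.hyps(1)] BWhileT.hyps(2) by blast
  qed
next
  case (BWhileF e \<sigma> c)
  from BWhileF.prems show ?case
    by (cases rule: gco.cases) (auto dest!: geval_conv dest: eval_det[OF BWhileF.hyps(1)])
qed

lemma gco_conv_div:
  assumes "gco c s Conv sa d" "\<not> (\<exists>sb. bigstep c s sb)"
  shows "diverges c s"
  using assms
proof (coinduction arbitrary: c s sa d)
  case (diverges c s sa d)
  from diverges(1) show ?case
  proof (cases rule: gco.cases)
    case GSkip then show ?thesis using diverges(2) by (auto intro: bigstep.intros)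
  next
    case (GAlloc x) then show ?thesis using diverges(2) by (auto intro: bigstep.intros)
  next
    case (GAssign x e v) then show ?thesis using diverges(2)
      by (auto intro: bigstep.intros dest!: geval_conv)
  next
    case (GSeq c1 \<sigma>' \<delta> c2)
    show ?thesis
    proof (cases "\<exists>sb. bigstep c1 s sb")
      case True
      then obtain sb where sb: "bigstep c1 s sb" by blast
      from bigstep_det_gco[OF sb GSeq(2)] GSeq(3) have "gco c2 sb Conv sa d" by simp
      moreover have "\<not> (\<exists>s2. bigstep c2 sb s2)" using diverges(2) sb GSeq(1)
        by (auto intro: bigstep.intros)
      ultimately show ?thesis using GSeq sb by (intro disjI2 disjI1) auto
    next
      case False then show ?thesis using GSeq by (intro disjI1) auto
    qed
  next
    case (GIfT v e \<delta> c1 c2)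
    then have ev: "eval e s v" "\<delta> = Conv" using geval_conv by blast+
    have "\<not> (\<exists>s2. bigstep c1 s s2)" using diverges(2) GIfT ev by (auto intro: bigstep.intros)
    then show ?thesis using GIfT ev by (intro disjI2 disjI1) auto
  next
    case (GIfF e \<delta> c2 c1)
    then have ev: "eval e s (N 0)" "\<delta> = Conv" using geval_conv by blast+
    have "\<not> (\<exists>s2. bigstep c2 s s2)" using diverges(2) GIfF ev by (auto intro: bigstep.intros)
    then show ?thesis using GIfF ev by (intro disjI2 disjI1) auto
  next
    case (GWhileT e v \<delta> c' \<sigma>' \<delta>')
    then have ev: "eval e s v" "\<delta> = Conv" using geval_conv by blast+
    show ?thesis
    proof (cases "\<exists>sb. bigstep c' s sb")
      case True
      then obtain sb where sb: "bigstep c' s sb" by blast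
      from bigstep_det_gco[OF sb] GWhileT ev have eq: "\<sigma>' = sb" "\<delta>' = Conv" by auto
      have "\<not> (\<exists>s2. bigstep (While e c') sb s2)" using diverges(2) sb GWhileT ev
        by (auto intro: bigstep.intros)
      then show ?thesis using GWhileT ev eq sb by (intro disjI2) auto
    next
      case False then show ?thesis using GWhileT ev by (intro disjI2 disjI1) auto
    qed
  next
    case (GWhileF e c')
    then show ?thesis using diverges(2) by (auto intro: bigstep.intros dest!: geval_conv)
  qed
qed

lemma div_gco:
  assumes "diverges c s"
  shows "gco c s Conv s' Div"
proof -
  have "(d = Conv \<and> d' = Div \<and> diverges c s) \<or> (d = Div \<and> d' = Div) \<Longrightarrow> gco c s d s' d'"
    for c s d s' d'
  proof (coinduction arbitrary: c s d s' d')
    case (gco c s d s' d')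
    then show ?case
    proof
      assume "d = Conv \<and> d' = Div \<and> diverges c s"
      then have h: "d = Conv" "d' = Div" "diverges c s" by auto
      from h(3) show ?case
      proof (cases rule: diverges.cases)
        case (DSeq1 c1 c2) then show ?thesis using h by fastforce
      next
        case (DSeq2 c1 \<sigma>' c2) then show ?thesis using h bigstep_gco by fastforce
      next
        case (DIfT e v c1 c2) then show ?thesis using h eval_geval by fastforce
      next
        case (DIfF e c2 c1) then show ?thesis using h eval_geval by fastforce
      next
        case (DWhile1 e v c') then show ?thesis using h eval_geval by fastforce
      next
        case (DWhile2 e v c' \<sigma>') then show ?thesis using h eval_geval bigstep_gco by fastforce
      qed
    next
      assume "d = Div \<and> d' = Div" then show ?case by blast
    qed
  qed
  then show ?thesis using assms by blast
qed

theorem theorem18: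
  fixes c :: com and \<sigma> \<sigma>' :: store
  shows "diverges c \<sigma> \<longleftrightarrow> gco c \<sigma> Conv \<sigma>' Div"
proof
  assume "diverges c \<sigma>" then show "gco c \<sigma> Conv \<sigma>' Div" by (rule div_gco)
next
  assume g: "gco c \<sigma> Conv \<sigma>' Div"
  have "\<not> (\<exists>sb. bigstep c \<sigma> sb)" using bigstep_det_gco[OF _ g] by auto
  then show "diverges c \<sigma>" using gco_conv_div[OF g] by blast
qed

end
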